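(* Let $\lambda,\mu\in\mathbb{C}$ be nonzero. For each integer $L\geq 2$ with $N=L^2$ and each $J\in\mathbb{C}$, let $$V_{N,J}(q)=\sum_{i\in\Lambda_L}\Biggl[\frac{\lambda}{4!}q_i^4-\frac{\mu^2}{2}q_i^2+\frac{J}{4}\sum_{j\in\mathcal{N}(i)}(q_i-q_j)^2\Biggr],\qquad q\in\mathbb{C}^N,$$ and let $\mathcal{S}(N,\lambda,\mu^2)$ be the set of $J\in\mathbb{C}$ for which there exists $q\in\mathbb{C}^N$ with $\frac{\partial V_{N,J}}{\partial q_i}(q)=0$ for all $i$ and $\det\bigl(\frac{\partial^2 V_{N,J}(q)}{\partial q_i\partial q_j}\bigr)_{i,j}=0$. Then the set $$\mathcal{T}(\lambda,\mu^2)=\bigcup_{N\geq 2}\mathcal{S}(N,\lambda,\mu^2),$$ the union over all such lattice sizes $N=L^2\geq 2$, is a countable subset of $\mathbb{C}$.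
   Context: $\Lambda_L$ is the square lattice $(\mathbb{Z}/L\mathbb{Z})^2$ with periodic boundary conditions, whose $N=L^2$ sites are labelled $1,\dots,N$; $q_i$ is the variable at site $i$, and $\mathcal{N}(i)$ denotes the four nearest-neighbouring sites of $i$ (counted with multiplicity if they coincide). $V_{N,J}$ is the potential energy of the two-dimensional nearest-neighbour $\phi^4$ model with coupling $J$, extended to complex $q$ and $J$. *)

theory Defs
  imports "HOL-Analysis.Analysis" "Jordan_Normal_Form.Determinant"
begin

text \<open>Sites of the periodic L x L lattice are labelled k = 0..L^2-1, with
  k corresponding to the lattice point (k div L, k mod L). A configuration is
  q :: nat => complex (only values at sites k < L^2 are relevant).\<close>

definition nbrs :: "nat \<Rightarrow> nat \<Rightarrow> nat list" where
  "nbrs L k = (let r = k div L; c = k mod L in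
     [((r + 1) mod L) * L + c, ((r + L - 1) mod L) * L + c,
      r * L + (c + 1) mod L, r * L + (c + L - 1) mod L])"

definition V :: "nat \<Rightarrow> complex \<Rightarrow> complex \<Rightarrow> complex \<Rightarrow> (nat \<Rightarrow> complex) \<Rightarrow> complex" where
  "V L J lam mu q = (\<Sum>i<L^2. lam / 24 * q i ^ 4 - mu^2 / 2 * q i ^ 2
      + J / 4 * sum_list (map (\<lambda>j. (q i - q j)^2) (nbrs L i)))"

definition pderiv_at :: "((nat \<Rightarrow> complex) \<Rightarrow> complex) \<Rightarrow> nat \<Rightarrow> (nat \<Rightarrow> complex) \<Rightarrow> complex" where
  "pderiv_at F i q = deriv (\<lambda>t. F (q(i := t))) (q i)"

definition S :: "nat \<Rightarrow> complex \<Rightarrow> complex \<Rightarrow> complex set" where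
  "S L lam mu = {J. \<exists>q. (\<forall>i<L^2. pderiv_at (V L J lam mu) i q = 0) \<and>
      det (mat (L^2) (L^2) (\<lambda>(i, j). pderiv_at (pderiv_at (V L J lam mu) j) i q)) = 0}"

end

theory Submission imports Defs begin

definition dl :: "nat \<Rightarrow> nat \<Rightarrow> complex" where "dl k i = (if k = i then 1 else 0)"

definition FF :: "nat \<Rightarrow> complex \<Rightarrow> complex \<Rightarrow> complex \<Rightarrow> nat \<Rightarrow> (nat \<Rightarrow> complex) \<Rightarrow> complex" where
  "FF L J lam mu i q = (\<Sum>k<L^2. dl k i * (lam/6 * q k^3 - mu^2 * q k)
      + J/2 * sum_list (map (\<lambda>j. (q k - q j) * (dl k i - dl j i)) (nbrs L k)))"

definition HH :: "nat \<Rightarrow> complex \<Rightarrow> complex \<Rightarrow> complex \<Rightarrow> nat \<Rightarrow> nat \<Rightarrow> (nat \<Rightarrow> complex) \<Rightarrow> complex" where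
  "HH L J lam mu i j q = (\<Sum>k<L^2. dl k j * dl k i * (lam/2 * q k^2 - mu^2)
      + J/2 * sum_list (map (\<lambda>l. (dl k i - dl l i) * (dl k j - dl l j)) (nbrs L k)))"

lemma d_upd: "((\<lambda>t. (q(i:=t)) k) has_field_derivative dl k i) (at x)"
  by (cases "k = i") (auto simp: dl_def)

lemma DERIV_sum_list:
  assumes "\<And>j. j \<in> set xs \<Longrightarrow> ((\<lambda>t. g j t) has_field_derivative g' j) (at x)"
  shows "((\<lambda>t. sum_list (map (\<lambda>j. g j t) xs)) has_field_derivative sum_list (map g' xs)) (at x)"
  using assms by (induction xs) (auto intro!: derivative_eq_intros)

lemma upd_eq: "(q(i:=t)) k = (if k = i then t else q k)" by simp

lemma pd_V: "pderiv_at (V L J lam mu) i q = FF L J lam mu i q"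
proof -
  have "((\<lambda>t. V L J lam mu (q(i:=t))) has_field_derivative FF L J lam mu i (q(i:=x))) (at x)" for x
    unfolding V_def FF_def
    apply (rule DERIV_sum)
    apply (rule derivative_eq_intros d_upd DERIV_sum_list refl)+
    apply (simp add: sum_list_const_mult mult_ac)
    apply (simp add: field_simps)
    done
  from this[of "q i"] show ?thesis unfolding pderiv_at_def by (simp add: DERIV_imp_deriv)
qed

lemma pd_FF: "pderiv_at (FF L J lam mu j) i q = HH L J lam mu i j q"
proof -
  have "((\<lambda>t. FF L J lam mu j (q(i:=t))) has_field_derivative HH L J lam mu i j (q(i:=x))) (at x)" for x
    unfolding HH_def FF_def
    apply (rule DERIV_sum)
    apply (rule derivative_eq_intros d_upd DERIV_sum_list refl)+
    apply (simp add: sum_list_const_mult mult_ac)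
    apply (simp add: field_simps)
    done
  from this[of "q i"] show ?thesis unfolding pderiv_at_def by (simp add: DERIV_imp_deriv)
qed

lemma pd2: "pderiv_at (pderiv_at (V L J lam mu) j) i q = HH L J lam mu i j q"
proof -
  have "pderiv_at (V L J lam mu) j = FF L J lam mu j" by (rule ext) (rule pd_V)
  thus ?thesis by (simp add: pd_FF)
qed


definition GG :: "nat \<Rightarrow> nat \<Rightarrow> (nat \<Rightarrow> complex) \<Rightarrow> complex" where
  "GG L i q = (\<Sum>k<L^2. 1/2 * sum_list (map (\<lambda>j. (q k - q j) * (dl k i - dl j i)) (nbrs L k)))"

lemma sum_dl: "i < n \<Longrightarrow> (\<Sum>k<n. dl k i * X k) = X i"
proof -
  assume "i < n"
  have "(\<Sum>k<n. dl k i * X k) = (\<Sum>k<n. if k = i then X i else 0)"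
    by (rule sum.cong) (auto simp: dl_def)
  thus ?thesis using \<open>i < n\<close> by simp
qed

lemma FF_split: "i < L^2 \<Longrightarrow> FF L J lam mu i q = lam/6 * q i^3 - mu^2 * q i + J * GG L i q"
  unfolding FF_def GG_def
  by (simp add: sum.distrib sum_dl sum_distrib_left)

lemma HH0: "i < L^2 \<Longrightarrow> HH L 0 lam mu i j q = dl i j * (lam/2 * q i^2 - mu^2)"
proof -
  assume i: "i < L^2"
  have "HH L 0 lam mu i j q = (\<Sum>k<L^2. dl k i * (dl k j * (lam/2 * q k^2 - mu^2)))"
    unfolding HH_def by (simp add: mult_ac)
  also have "\<dots> = dl i j * (lam/2 * q i^2 - mu^2)" using i by (rule sum_dl)
  finally show ?thesis .
qed

lemma lt_sq: "(a::nat) < L \<Longrightarrow> c < L \<Longrightarrow> a * L + c < L^2"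
proof -
  assume a: "a < L" and c: "c < L"
  have "(a+1)*L \<le> L*L" using a by (intro mult_right_mono) auto
  thus ?thesis using c by (simp add: power2_eq_square algebra_simps)
qed

lemma nbrs_lt: "L \<ge> 1 \<Longrightarrow> k < L^2 \<Longrightarrow> j \<in> set (nbrs L k) \<Longrightarrow> j < L^2"
proof -
  assume L: "L \<ge> 1" and k: "k < L^2" and j: "j \<in> set (nbrs L k)"
  have r: "k div L < L" using k L by (simp add: power2_eq_square less_mult_imp_div_less)
  have c: "k mod L < L" using L by simp
  have m: "x mod L < L" for x using L by simp
  show ?thesis using j r c m unfolding nbrs_def Let_def
    by (auto intro!: lt_sq)
qed


locale lat =
  fixes L :: nat and lam mu :: complex
  assumes L1: "L \<ge> 1" and lam0: "lam \<noteq> 0" and mu0: "mu \<noteq> 0"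
begin

abbreviation "N \<equiv> L^2"

definition mono :: "(nat \<Rightarrow> nat) \<Rightarrow> (nat \<Rightarrow> complex) \<Rightarrow> complex" where
  "mono a q = (\<Prod>i<N. q i ^ a i)"

definition BB :: "(nat \<Rightarrow> nat) set" where
  "BB = {b. \<forall>i. b i \<le> 2 \<and> (N \<le> i \<longrightarrow> b i = 0)}"

definition crit where "crit q J \<longleftrightarrow> (\<forall>i<N. FF L J lam mu i q = 0)"

definition rep :: "((nat \<Rightarrow> complex) \<Rightarrow> complex \<Rightarrow> complex) \<Rightarrow> bool" where
  "rep f \<longleftrightarrow> (\<exists>c. \<forall>q J. crit q J \<longrightarrow> f q J = (\<Sum>b\<in>BB. poly (c b) J * mono b q))"

lemma finite_BB: "finite BB"
proof -
  have "BB \<subseteq> (\<lambda>f i. if i < N then f i else 0) ` ({..<N} \<rightarrow>\<^sub>E {..2::nat})"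
  proof
    fix b assume b: "b \<in> BB"
    have "b = (\<lambda>i. if i < N then restrict b {..<N} i else 0)"
      using b by (auto simp: BB_def)
    moreover have "restrict b {..<N} \<in> {..<N} \<rightarrow>\<^sub>E {..2}" using b by (auto simp: BB_def)
    ultimately show "b \<in> (\<lambda>f i. if i < N then f i else 0) ` ({..<N} \<rightarrow>\<^sub>E {..2::nat})" by blast
  qed
  thus ?thesis by (rule finite_subset) (intro finite_imageI finite_PiE, auto)
qed

lemma rep_cong: "rep g \<Longrightarrow> (\<And>q J. crit q J \<Longrightarrow> f q J = g q J) \<Longrightarrow> rep f"
  unfolding rep_def by metis

lemma rep_add: "rep f \<Longrightarrow> rep g \<Longrightarrow> rep (\<lambda>q J. f q J + g q J)"
proof -
  assume "rep f" "rep g"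
  then obtain c d where c: "\<forall>q J. crit q J \<longrightarrow> f q J = (\<Sum>b\<in>BB. poly (c b) J * mono b q)"
    and d: "\<forall>q J. crit q J \<longrightarrow> g q J = (\<Sum>b\<in>BB. poly (d b) J * mono b q)"
    unfolding rep_def by blast
  show ?thesis unfolding rep_def
    by (rule exI[of _ "\<lambda>b. c b + d b"]) (simp add: c d sum.distrib algebra_simps)
qed

lemma rep_scale: "rep f \<Longrightarrow> rep (\<lambda>q J. poly p J * f q J)"
proof -
  assume "rep f"
  then obtain c where c: "\<forall>q J. crit q J \<longrightarrow> f q J = (\<Sum>b\<in>BB. poly (c b) J * mono b q)"
    unfolding rep_def by blast
  show ?thesis unfolding rep_def
    by (rule exI[of _ "\<lambda>b. p * c b"]) (simp add: c sum_distrib_left mult_ac)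
qed

lemma rep_zero: "rep (\<lambda>q J. 0)"
  unfolding rep_def by (rule exI[of _ "\<lambda>b. 0"]) simp

lemma rep_sum: "finite A \<Longrightarrow> (\<And>x. x \<in> A \<Longrightarrow> rep (f x)) \<Longrightarrow> rep (\<lambda>q J. \<Sum>x\<in>A. f x q J)"
proof (induction A rule: finite_induct)
  case empty thus ?case by (simp add: rep_zero)
next
  case (insert a A)
  have "rep (\<lambda>q J. f a q J + (\<Sum>x\<in>A. f x q J))"
    by (rule rep_add) (use insert in auto)
  thus ?case using insert by simp
qed

lemma rep_mono_B: "a \<in> BB \<Longrightarrow> rep (\<lambda>q J. mono a q)"
  unfolding rep_def
proof (rule exI[of _ "\<lambda>b. if b = a then 1 else 0"], intro allI impI)
  fix q J assume "a \<in> BB"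
  have "(\<Sum>b\<in>BB. poly (if b = a then 1 else 0) J * mono b q) = (\<Sum>b\<in>BB. if b = a then mono a q else 0)"
    by (rule sum.cong) auto
  also have "\<dots> = mono a q" using \<open>a \<in> BB\<close> finite_BB by simp
  finally show "mono a q = (\<Sum>b\<in>BB. poly (if b = a then 1 else 0) J * mono b q)" by simp
qed

lemma mono_add: "i < N \<Longrightarrow> mono (a(i := a i + m)) q = mono a q * q i ^ m"
proof -
  assume i: "i < N"
  let ?R = "(\<Prod>j\<in>{..<N}-{i}. q j ^ a j)"
  have R: "(\<Prod>j\<in>{..<N}-{i}. q j ^ (a(i := a i + m)) j) = ?R"
    by (rule prod.cong) auto
  have A: "mono (a(i := a i + m)) q = q i ^ (a i + m) * ?R"
    unfolding mono_def using i R by (subst prod.remove[of _ i]) auto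
  have B: "mono a q = q i ^ a i * ?R"
    unfolding mono_def using i by (subst prod.remove[of _ i]) auto
  show ?thesis unfolding A B by (simp add: power_add mult_ac)
qed

lemma sum_upd: "i < N \<Longrightarrow> (\<Sum>k<N. (a(i := x)) k) + a i = (\<Sum>k<N. a k) + (x::nat)"
proof -
  assume i: "i < N"
  have "(\<Sum>k<N. (a(i := x)) k) = x + (\<Sum>k\<in>{..<N}-{i}. (a(i := x)) k)"
    using i by (subst sum.remove[of _ i]) auto
  also have "(\<Sum>k\<in>{..<N}-{i}. (a(i := x)) k) = (\<Sum>k\<in>{..<N}-{i}. a k)"
    by (rule sum.cong) auto
  also have "(\<Sum>k<N. a k) = a i + (\<Sum>k\<in>{..<N}-{i}. a k)"
    using i by (subst sum.remove[of _ i]) auto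
  ultimately show ?thesis by simp
qed

definition lin :: "((nat \<Rightarrow> complex) \<Rightarrow> complex) \<Rightarrow> bool" where
  "lin f \<longleftrightarrow> (\<exists>w. \<forall>q. f q = (\<Sum>j<N. w j * q j))"

lemma lin_var: "k < N \<Longrightarrow> lin (\<lambda>q. q k)"
  unfolding lin_def by (rule exI[of _ "\<lambda>j. dl j k"]) (simp add: sum_dl)

lemma lin_add: "lin f \<Longrightarrow> lin g \<Longrightarrow> lin (\<lambda>q. f q + g q)"
proof -
  assume "lin f" "lin g"
  then obtain v w where v: "\<forall>q. f q = (\<Sum>j<N. v j * q j)" and w: "\<forall>q. g q = (\<Sum>j<N. w j * q j)"
    unfolding lin_def by blast
  show ?thesis unfolding lin_def
    by (rule exI[of _ "\<lambda>j. v j + w j"]) (simp add: v w sum.distrib distrib_right)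
qed

lemma lin_cmult: "lin f \<Longrightarrow> lin (\<lambda>q. c * f q)"
proof -
  assume "lin f" then obtain w where w: "\<forall>q. f q = (\<Sum>j<N. w j * q j)" unfolding lin_def by blast
  show ?thesis unfolding lin_def
    by (rule exI[of _ "\<lambda>j. c * w j"]) (simp add: w sum_distrib_left mult_ac)
qed

lemma lin_multc: "lin f \<Longrightarrow> lin (\<lambda>q. f q * c)"
  using lin_cmult[of f c] by (simp add: mult_ac)

lemma lin_diff: "lin f \<Longrightarrow> lin g \<Longrightarrow> lin (\<lambda>q. f q - g q)"
  using lin_add[of f "\<lambda>q. (-1) * g q"] lin_cmult[of g "-1"] by simp

lemma lin_zero: "lin (\<lambda>q. 0)"
  unfolding lin_def by (rule exI[of _ "\<lambda>j. 0"]) simp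

lemma lin_sum: "finite A \<Longrightarrow> (\<And>x. x \<in> A \<Longrightarrow> lin (f x)) \<Longrightarrow> lin (\<lambda>q. \<Sum>x\<in>A. f x q)"
proof (induction A rule: finite_induct)
  case empty thus ?case by (simp add: lin_zero)
next
  case (insert a A)
  have "lin (\<lambda>q. f a q + (\<Sum>x\<in>A. f x q))"
    by (rule lin_add) (use insert in auto)
  thus ?case using insert by simp
qed

lemma lin_sum_list: "(\<And>x. x \<in> set xs \<Longrightarrow> lin (f x)) \<Longrightarrow> lin (\<lambda>q. sum_list (map (\<lambda>x. f x q) xs))"
  by (induction xs) (auto intro: lin_add lin_zero)

lemma lin_GG: "lin (GG L i)"
proof -
  have "lin (\<lambda>q. \<Sum>k<N. 1/2 * sum_list (map (\<lambda>j. (q k - q j) * (dl k i - dl j i)) (nbrs L k)))"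
  proof (rule lin_sum)
    fix k assume k: "k \<in> {..<N}"
    show "lin (\<lambda>q. 1/2 * sum_list (map (\<lambda>j. (q k - q j) * (dl k i - dl j i)) (nbrs L k)))"
      apply (rule lin_cmult, rule lin_sum_list, rule lin_multc, rule lin_diff)
      using k nbrs_lt[OF L1, of k] by (auto intro: lin_var)
  qed simp
  thus ?thesis unfolding GG_def[abs_def] .
qed


lemma rep_mono: "(\<forall>i. N \<le> i \<longrightarrow> a i = 0) \<Longrightarrow> rep (\<lambda>q J. mono a q)"
proof (induction "\<Sum>k<N. a k" arbitrary: a rule: less_induct)
  case less
  show ?case
  proof (cases "\<forall>i<N. a i \<le> 2")
    case True
    have "\<forall>k. a k \<le> 2 \<and> (N \<le> k \<longrightarrow> a k = 0)"
    proof (intro allI conjI impI)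
      fix k show "a k \<le> 2" using True less.prems by (cases "k < N") auto
      show "N \<le> k \<Longrightarrow> a k = 0" using less.prems by simp
    qed
    then have "a \<in> BB" unfolding BB_def by simp
    then show ?thesis by (rule rep_mono_B)
  next
    case False
    then obtain i where i: "i < N" "a i \<ge> 3" by auto
    define a' where "a' = a(i := a i - 3)"
    obtain w where w: "\<forall>q. GG L i q = (\<Sum>j<N. w j * q j)" using lin_GG[of i] unfolding lin_def by blast
    let ?m = "\<lambda>j. a'(j := a' j + 1)"
    have a'i: "a' i = a i - 3" by (simp add: a'_def)
    have aa: "a = a'(i := a' i + 3)" using i(2) by (intro ext) (simp add: a'_def)
    have s1: "(\<Sum>k<N. a' k) + a i = (\<Sum>k<N. a k) + (a i - 3)"
      unfolding a'_def using i(1) by (rule sum_upd)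
    have IH: "rep (\<lambda>q J. mono (?m j) q)" if j: "j < N" for j
    proof (rule less.hyps)
      have "(\<Sum>k<N. ?m j k) + a' j = (\<Sum>k<N. a' k) + (a' j + 1)" using j by (rule sum_upd)
      thus "(\<Sum>k<N. ?m j k) < (\<Sum>k<N. a k)" using s1 i(2) by linarith
      show "\<forall>k. N \<le> k \<longrightarrow> ?m j k = 0" using j less.prems by (simp add: a'_def)
    qed
    have R: "rep (\<lambda>q J. poly [:6*mu^2/lam:] J * mono (?m i) q
              + poly [:0, -6/lam:] J * (\<Sum>j<N. poly [:w j:] J * mono (?m j) q))"
      apply (rule rep_add)
       apply (rule rep_scale, rule IH, rule i(1))
      apply (rule rep_scale, rule rep_sum, rule finite_lessThan)
      apply (rule rep_scale, rule IH, simp)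
      done
    show ?thesis
    proof (rule rep_cong[OF R])
      fix q J assume "crit q J"
      then have "FF L J lam mu i q = 0" using i(1) unfolding crit_def by blast
      define S where "S = (\<Sum>j<N. w j * q j)"
      define M where "M = mono a' q"
      have F: "lam/6 * q i^3 - mu^2 * q i + J * S = 0"
        using FF_split[OF i(1)] w \<open>FF L J lam mu i q = 0\<close> unfolding S_def by simp
      have F2: "lam/6 * q i^3 = mu^2 * q i - J * S" using F by (simp add: algebra_simps)
      have q3: "q i ^ 3 = 6/lam * (mu^2 * q i - J * S)"
        unfolding F2[symmetric] using lam0 by simp
      have mm: "mono (?m j) q = M * q j" if "j < N" for j
        using mono_add[OF that, of a' 1 q] unfolding M_def by simp
      have sm: "(\<Sum>j<N. poly [:w j:] J * mono (?m j) q) = M * S"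
        unfolding S_def sum_distrib_left
      proof (rule sum.cong[OF refl])
        fix x assume "x \<in> {..<N}"
        then show "poly [:w x:] J * mono (?m x) q = M * (w x * q x)" using mm[of x] by simp
      qed
      have "mono a q = M * q i ^ 3" using mono_add[OF i(1), of a' 3 q] aa unfolding M_def by simp
      also have "\<dots> = 6*mu^2/lam * (M * q i) - 6/lam * J * (M * S)"
        unfolding q3 using lam0 by (simp add: field_simps)
      also have "\<dots> = poly [:6*mu^2/lam:] J * mono (?m i) q
              + poly [:0, -6/lam:] J * (\<Sum>j<N. poly [:w j:] J * mono (?m j) q)"
      proof -
        have A: "poly [:6*mu^2/lam:] J * mono (?m i) q = 6*mu^2/lam * (M*q i)" using mm[OF i(1)] by simp
        have B: "poly [:0, -6/lam:] J * (M*S) = - (6/lam * J * (M*S))" by simp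
        show ?thesis unfolding sm A B by (simp only: diff_conv_add_uminus)
      qed
      finally show "mono a q = poly [:6*mu^2/lam:] J * mono (?m i) q
              + poly [:0, -6/lam:] J * (\<Sum>j<N. poly [:w j:] J * mono (?m j) q)" .
    qed
  qed
qed


definition Pc :: "((nat \<Rightarrow> complex) \<Rightarrow> complex \<Rightarrow> complex) \<Rightarrow> bool" where
  "Pc f \<longleftrightarrow> (\<forall>a. (\<forall>i. N \<le> i \<longrightarrow> a i = 0) \<longrightarrow> rep (\<lambda>q J. f q J * mono a q))"

lemma rep_mult: "Pc f \<Longrightarrow> rep h \<Longrightarrow> rep (\<lambda>q J. f q J * h q J)"
proof -
  assume P: "Pc f" and "rep h"
  then obtain c where c: "\<forall>q J. crit q J \<longrightarrow> h q J = (\<Sum>b\<in>BB. poly (c b) J * mono b q)"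
    unfolding rep_def by blast
  have R: "rep (\<lambda>q J. \<Sum>b\<in>BB. poly (c b) J * (f q J * mono b q))"
  proof (rule rep_sum[OF finite_BB])
    fix b assume "b \<in> BB"
    then have "\<forall>i. N \<le> i \<longrightarrow> b i = 0" unfolding BB_def by blast
    then have "rep (\<lambda>q J. f q J * mono b q)" using P unfolding Pc_def by blast
    then show "rep (\<lambda>q J. poly (c b) J * (f q J * mono b q))" by (rule rep_scale)
  qed
  show ?thesis
    by (rule rep_cong[OF R]) (simp add: c sum_distrib_left mult_ac)
qed

lemma P_const: "Pc (\<lambda>q J. c)"
  unfolding Pc_def using rep_scale[OF rep_mono, of _ "[:c:]"] by simp

lemma P_J: "Pc (\<lambda>q J. J)"
  unfolding Pc_def using rep_scale[OF rep_mono, of _ "[:0,1:]"] by simp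

lemma P_var: "k < N \<Longrightarrow> Pc (\<lambda>q J. q k)"
  unfolding Pc_def
proof (intro allI impI)
  fix a :: "nat \<Rightarrow> nat" assume k: "k < N" and a: "\<forall>i. N \<le> i \<longrightarrow> a i = 0"
  have "rep (\<lambda>q J. mono (a(k := a k + 1)) q)" by (rule rep_mono) (use a k in auto)
  then show "rep (\<lambda>q J. q k * mono a q)" using mono_add[OF k, of a 1] by (simp add: mult_ac)
qed

lemma P_add: "Pc f \<Longrightarrow> Pc g \<Longrightarrow> Pc (\<lambda>q J. f q J + g q J)"
  unfolding Pc_def using rep_add by (simp add: distrib_right)

lemma P_mult: "Pc f \<Longrightarrow> Pc g \<Longrightarrow> Pc (\<lambda>q J. f q J * g q J)"
proof -
  assume f: "Pc f" and g: "Pc g"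
  show ?thesis unfolding Pc_def
  proof (intro allI impI)
    fix a :: "nat \<Rightarrow> nat" assume "\<forall>i. N \<le> i \<longrightarrow> a i = 0"
    then have "rep (\<lambda>q J. g q J * mono a q)" using g unfolding Pc_def by blast
    from rep_mult[OF f this] show "rep (\<lambda>q J. f q J * g q J * mono a q)" by (simp add: mult_ac)
  qed
qed

lemma P_diff: "Pc f \<Longrightarrow> Pc g \<Longrightarrow> Pc (\<lambda>q J. f q J - g q J)"
  using P_add[of f "\<lambda>q J. (-1) * g q J"] P_mult[OF P_const[of "-1"], of g] by simp

lemma P_pow: "Pc f \<Longrightarrow> Pc (\<lambda>q J. f q J ^ n)"
  by (induction n) (auto intro: P_mult P_const)

lemma P_sum: "finite A \<Longrightarrow> (\<And>x. x \<in> A \<Longrightarrow> Pc (f x)) \<Longrightarrow> Pc (\<lambda>q J. \<Sum>x\<in>A. f x q J)"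
proof (induction A rule: finite_induct)
  case empty thus ?case using P_const[of 0] by simp
next
  case (insert a A)
  have "Pc (\<lambda>q J. f a q J + (\<Sum>x\<in>A. f x q J))"
    by (rule P_add) (use insert in auto)
  thus ?case using insert by simp
qed

lemma P_prod: "finite A \<Longrightarrow> (\<And>x. x \<in> A \<Longrightarrow> Pc (f x)) \<Longrightarrow> Pc (\<lambda>q J. \<Prod>x\<in>A. f x q J)"
proof (induction A rule: finite_induct)
  case empty thus ?case using P_const[of 1] by simp
next
  case (insert a A)
  have "Pc (\<lambda>q J. f a q J * (\<Prod>x\<in>A. f x q J))"
    by (rule P_mult) (use insert in auto)
  thus ?case using insert by simp
qed

lemma P_HH: "Pc (\<lambda>q J. HH L J lam mu i j q)"
proof -
  have "Pc (\<lambda>q J. \<Sum>k<N. dl k j * dl k i * (lam/2 * q k^2 - mu^2)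
      + J/2 * sum_list (map (\<lambda>l. (dl k i - dl l i) * (dl k j - dl l j)) (nbrs L k)))"
  proof (rule P_sum)
    fix k assume k: "k \<in> {..<N}"
    have "Pc (\<lambda>q J. dl k j * dl k i * (lam/2 * q k^2 - mu^2) + J * (1/2 * sum_list (map (\<lambda>l. (dl k i - dl l i) * (dl k j - dl l j)) (nbrs L k))))"
      using k by (intro P_add P_mult P_const P_diff P_pow P_var P_J) auto
    then show "Pc (\<lambda>q J. dl k j * dl k i * (lam/2 * q k^2 - mu^2) + J/2 * sum_list (map (\<lambda>l. (dl k i - dl l i) * (dl k j - dl l j)) (nbrs L k)))"
      by (simp add: mult_ac)
  qed simp
  thus ?thesis unfolding HH_def .
qed

definition D :: "(nat \<Rightarrow> complex) \<Rightarrow> complex \<Rightarrow> complex" where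
  "D q J = det (mat N N (\<lambda>(i, j). HH L J lam mu i j q))"

lemma P_D: "Pc D"
proof -
  have eq: "D q J = (\<Sum>p\<in>{p. p permutes {0..<N}}. signof p * (\<Prod>i=0..<N. HH L J lam mu i (p i) q))" for q J
  proof -
    have "D q J = (\<Sum>p\<in>{p. p permutes {0..<N}}. signof p * (\<Prod>i=0..<N. (mat N N (\<lambda>(i, j). HH L J lam mu i j q)) $$ (i, p i)))"
      unfolding D_def by (rule det_def') simp
    also have "\<dots> = (\<Sum>p\<in>{p. p permutes {0..<N}}. signof p * (\<Prod>i=0..<N. HH L J lam mu i (p i) q))"
    proof (rule sum.cong[OF refl])
      fix p assume "p \<in> {p. p permutes {0..<N}}"
      then have p: "p permutes {0..<N}" by simp
      have "(\<Prod>i=0..<N. (mat N N (\<lambda>(i, j). HH L J lam mu i j q)) $$ (i, p i)) = (\<Prod>i=0..<N. HH L J lam mu i (p i) q)"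
      proof (rule prod.cong[OF refl])
        fix i assume "i \<in> {0..<N}"
        then have "p i \<in> {0..<N}" using permutes_in_image[OF p] by simp
        then show "(mat N N (\<lambda>(i, j). HH L J lam mu i j q)) $$ (i, p i) = HH L J lam mu i (p i) q"
          using \<open>i \<in> {0..<N}\<close> by simp
      qed
      then show "signof p * (\<Prod>i=0..<N. (mat N N (\<lambda>(i, j). HH L J lam mu i j q)) $$ (i, p i)) = signof p * (\<Prod>i=0..<N. HH L J lam mu i (p i) q)" by simp
    qed
    finally show ?thesis .
  qed
  have "Pc (\<lambda>q J. \<Sum>p\<in>{p. p permutes {0..<N}}. signof p * (\<Prod>i=0..<N. HH L J lam mu i (p i) q))"
    by (intro P_sum P_mult P_const P_prod P_HH finite_permutations finite_atLeastLessThan)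
  then show ?thesis unfolding eq[abs_def] .
qed


end

definition kap :: "complex \<Rightarrow> nat \<Rightarrow> complex \<Rightarrow> complex" where
  "kap r k t = (if k = 0 then (if t = 0 then 1 else 0)
     else if k = 1 then (if t = 0 then 0 else if t = r then 1/(2*r) else -1/(2*r))
     else (if t = 0 then -1/r^2 else 1/(2*r^2)))"

lemma kap_sum:
  assumes r: "r \<noteq> 0" and k: "k \<le> 2" and m: "m \<le> 2"
  shows "(\<Sum>t\<in>{0,r,-r}. kap r k t * t^m) = (if k = m then 1 else 0)"
proof -
  have d1: "-r \<noteq> r"
  proof
    assume "-r = r" then have "r + r = 0" by (metis add.right_inverse)
    then have "2 * r = 0" by simp
    then show False using r by simp
  qed
  have d: "-r \<noteq> r" "-r \<noteq> 0" "r \<noteq> -r" "0 \<noteq> -r" "0 \<noteq> r" using d1 r by auto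
  have s: "(\<Sum>t\<in>{0,r,-r}. kap r k t * t^m) = kap r k 0 * 0^m + kap r k r * r^m + kap r k (-r) * (-r)^m"
    using d by simp
  have "k = 0 \<or> k = 1 \<or> k = 2" "m = 0 \<or> m = 1 \<or> m = 2" using k m by auto
  then show ?thesis unfolding s using r d by (elim disjE; simp add: kap_def field_simps)
qed

context lat begin

lemma grid_indep:
  assumes r: "r \<noteq> 0"
    and Z: "\<forall>z\<in>PiE {..<N} (\<lambda>_. {0,r,-r}). (\<Sum>b\<in>BB. u b * mono b z) = 0"
    and b0: "b0 \<in> BB"
  shows "u b0 = 0"
proof -
  let ?T = "{0,r,-r}"
  let ?G = "PiE {..<N} (\<lambda>_. ?T)"
  have delta: "(\<Prod>i<N. \<Sum>t\<in>?T. kap r (b0 i) t * t ^ b i) = (if b = b0 then 1 else 0)" if b: "b \<in> BB" for b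
  proof -
    have "(\<Prod>i<N. \<Sum>t\<in>?T. kap r (b0 i) t * t ^ b i) = (\<Prod>i<N. if b0 i = b i then 1 else 0)"
    proof (rule prod.cong[OF refl])
      fix i
      have "b0 i \<le> 2" "b i \<le> 2" using b b0 unfolding BB_def by blast+
      then show "(\<Sum>t\<in>?T. kap r (b0 i) t * t ^ b i) = (if b0 i = b i then 1 else 0)"
        using kap_sum[OF r, of "b0 i" "b i"] by simp
    qed
    also have "\<dots> = (if b = b0 then 1 else 0)"
    proof (cases "b = b0")
      case True thus ?thesis by simp
    next
      case False
      then obtain i where "b i \<noteq> b0 i" by auto
      have "i < N"
      proof (rule ccontr)
        assume "\<not> i < N" then have "N \<le> i" by simp
        then have "b i = 0" "b0 i = 0" using b b0 unfolding BB_def by blast+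
        then show False using \<open>b i \<noteq> b0 i\<close> by simp
      qed
      have "(\<Prod>i<N. if b0 i = b i then 1 else (0::complex)) = 0"
        by (rule prod_zero) (use \<open>i < N\<close> \<open>b i \<noteq> b0 i\<close> in \<open>auto intro!: bexI[of _ i]\<close>)
      then show ?thesis using False by simp
    qed
    finally show ?thesis .
  qed
  have "0 = (\<Sum>z\<in>?G. (\<Prod>i<N. kap r (b0 i) (z i)) * (\<Sum>b\<in>BB. u b * mono b z))"
    using Z by simp
  also have "\<dots> = (\<Sum>b\<in>BB. u b * (\<Sum>z\<in>?G. \<Prod>i<N. kap r (b0 i) (z i) * z i ^ b i))"
    unfolding sum_distrib_left mono_def
    by (subst sum.swap, intro sum.cong refl) (simp add: prod.distrib mult_ac)
  also have "\<dots> = (\<Sum>b\<in>BB. u b * (\<Prod>i<N. \<Sum>t\<in>?T. kap r (b0 i) t * t ^ b i))"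
  proof -
    have "(\<Prod>i<N. \<Sum>t\<in>?T. kap r (b0 i) t * t ^ b i) = (\<Sum>z\<in>?G. \<Prod>i<N. kap r (b0 i) (z i) * z i ^ b i)" for b
      by (rule prod_sum_PiE) auto
    then show ?thesis by simp
  qed
  also have "\<dots> = (\<Sum>b\<in>BB. if b = b0 then u b0 else 0)"
    by (rule sum.cong[OF refl]) (simp add: delta)
  also have "\<dots> = u b0" using b0 finite_BB by simp
  finally show ?thesis by simp
qed


lemma S_crit: "J \<in> S L lam mu \<Longrightarrow> \<exists>q. crit q J \<and> D q J = 0"
  unfolding S_def crit_def D_def by (simp add: pd_V pd2)

lemma zero_BB: "(\<lambda>_. 0) \<in> BB" unfolding BB_def by simp

lemma mono_zero: "mono (\<lambda>_. 0) q = 1" unfolding mono_def by simp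

lemma D_grid:
  assumes r2: "r^2 = 6*mu^2/lam" and z: "\<forall>i<N. z i \<in> {0, r, -r}"
  shows "crit z 0" and "D z 0 \<noteq> 0"
proof -
  have lr: "lam/6 * r^2 = mu^2" using r2 lam0 by simp
  have zz: "z i ^ 2 = 0 \<or> z i ^ 2 = r^2" if "i < N" for i using z that by auto
  show "crit z 0" unfolding crit_def
  proof (intro allI impI)
    fix i assume i: "i < N"
    have "FF L 0 lam mu i z = z i * (lam/6 * z i^2 - mu^2)" using FF_split[OF i]
      by (simp add: power2_eq_square power3_eq_cube algebra_simps)
    then show "FF L 0 lam mu i z = 0" using zz[OF i] lr by auto
  qed
  let ?A = "mat N N (\<lambda>(i, j). HH L 0 lam mu i j z)"
  have A: "?A \<in> carrier_mat N N" by simp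
  have ut: "upper_triangular ?A" unfolding upper_triangular_def by (auto simp: HH0 dl_def)
  have "D z 0 = prod_list (diag_mat ?A)" unfolding D_def by (rule det_upper_triangular[OF ut A])
  also have "\<dots> = (\<Prod>i = 0..<N. lam/2 * z i ^2 - mu^2)"
    unfolding prod_list_diag_prod by (intro prod.cong refl) (auto simp: HH0 dl_def)
  also have "\<dots> \<noteq> 0"
  proof -
    have "lam/2 * z i ^2 - mu^2 \<noteq> 0" if "i < N" for i
    proof -
      have "lam/2 * r^2 = 3 * mu^2" using lr by (simp add: field_simps)
      then show ?thesis using zz[OF that] mu0 by auto
    qed
    then show ?thesis by simp
  qed
  finally show "D z 0 \<noteq> 0" .
qed

lemma S_finite: "finite (S L lam mu)"
proof -
  have "\<forall>a\<in>BB. rep (\<lambda>q J. D q J * mono a q)"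
    using P_D unfolding Pc_def BB_def by blast
  then have "\<forall>a\<in>BB. \<exists>c. \<forall>q J. crit q J \<longrightarrow> D q J * mono a q = (\<Sum>b\<in>BB. poly (c b) J * mono b q)"
    unfolding rep_def by blast
  then obtain C where C: "\<forall>a\<in>BB. \<forall>q J. crit q J \<longrightarrow> D q J * mono a q = (\<Sum>b\<in>BB. poly (C a b) J * mono b q)"
    by (metis bchoice)
  define K where "K = card BB"
  obtain e where e: "bij_betw e {0..<K} BB" unfolding K_def using ex_bij_betw_nat_finite[OF finite_BB] by blast
  have eB: "e s \<in> BB" if "s < K" for s using e that bij_betwE by fastforce
  have reidx: "(\<Sum>b\<in>BB. g b) = (\<Sum>s\<in>{0..<K}. g (e s))" for g :: "(nat \<Rightarrow> nat) \<Rightarrow> complex"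
    using sum.reindex_bij_betw[OF e, of g] by simp
  define Mt where "Mt J = mat K K (\<lambda>(r, s). poly (C (e r) (e s)) J)" for J
  have Mt_c: "Mt J \<in> carrier_mat K K" for J unfolding Mt_def by simp
  define P where "P = (\<Sum>p\<in>{p. p permutes {0..<K}}. [:signof p:] * (\<Prod>i=0..<K. C (e i) (e (p i))))"
  have detP: "det (Mt J) = poly P J" for J
  proof -
    have "det (Mt J) = (\<Sum>p\<in>{p. p permutes {0..<K}}. signof p * (\<Prod>i=0..<K. Mt J $$ (i, p i)))"
      by (rule det_def'[OF Mt_c])
    also have "\<dots> = (\<Sum>p\<in>{p. p permutes {0..<K}}. signof p * (\<Prod>i=0..<K. poly (C (e i) (e (p i))) J))"
    proof (rule sum.cong[OF refl])
      fix p assume "p \<in> {p. p permutes {0..<K}}"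
      then have p: "p permutes {0..<K}" by simp
      have "(\<Prod>i=0..<K. Mt J $$ (i, p i)) = (\<Prod>i=0..<K. poly (C (e i) (e (p i))) J)"
      proof (rule prod.cong[OF refl])
        fix i assume "i \<in> {0..<K}"
        then have "p i \<in> {0..<K}" using permutes_in_image[OF p] by simp
        then show "Mt J $$ (i, p i) = poly (C (e i) (e (p i))) J"
          using \<open>i \<in> {0..<K}\<close> unfolding Mt_def by simp
      qed
      then show "signof p * (\<Prod>i=0..<K. Mt J $$ (i, p i)) = signof p * (\<Prod>i=0..<K. poly (C (e i) (e (p i))) J)" by simp
    qed
    also have "\<dots> = poly P J" unfolding P_def by (simp add: poly_sum poly_prod)
    finally show ?thesis .
  qed
  have S0: "poly P J = 0" if J: "J \<in> S L lam mu" for J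
  proof -
    obtain q where q: "crit q J" "D q J = 0" using S_crit[OF J] by blast
    define w where "w = vec K (\<lambda>s. mono (e s) q)"
    have wc: "w \<in> carrier_vec K" unfolding w_def by simp
    obtain s0 where s0: "s0 < K" "e s0 = (\<lambda>_. 0)"
      using e zero_BB unfolding bij_betw_def by (metis atLeastLessThan_iff imageE)
    have "w \<noteq> 0\<^sub>v K"
    proof
      assume "w = 0\<^sub>v K"
      then have "w $ s0 = 0" using s0 by simp
      then show False using s0 unfolding w_def by (simp add: mono_zero)
    qed
    moreover have "Mt J *\<^sub>v w = 0\<^sub>v K"
    proof (rule eq_vecI)
      show "dim_vec (Mt J *\<^sub>v w) = dim_vec (0\<^sub>v K)" unfolding Mt_def by simp
      fix r assume "r < dim_vec (0\<^sub>v K)"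
      then have r: "r < K" by simp
      have "(Mt J *\<^sub>v w) $ r = (\<Sum>s\<in>{0..<K}. poly (C (e r) (e s)) J * mono (e s) q)"
        using r unfolding Mt_def w_def by (simp add: scalar_prod_def)
      also have "\<dots> = (\<Sum>b\<in>BB. poly (C (e r) b) J * mono b q)" by (rule reidx[symmetric])
      also have "\<dots> = D q J * mono (e r) q" using C eB[OF r] q(1) by simp
      also have "\<dots> = 0" using q(2) by simp
      finally show "(Mt J *\<^sub>v w) $ r = 0\<^sub>v K $ r" using r by simp
    qed
    ultimately have "det (Mt J) = 0" using det_0_iff_vec_prod_zero[OF Mt_c] wc by blast
    then show ?thesis using detP by simp
  qed
  have P0: "poly P 0 \<noteq> 0"
  proof
    assume "poly P 0 = 0"
    then have "det (transpose_mat (Mt 0)) = 0" using detP det_transpose[OF Mt_c] by simp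
    then obtain u where u: "u \<in> carrier_vec K" "u \<noteq> 0\<^sub>v K" "transpose_mat (Mt 0) *\<^sub>v u = 0\<^sub>v K"
      using det_0_iff_vec_prod_zero[of "transpose_mat (Mt 0)" K] Mt_c by auto
    have col: "(\<Sum>r\<in>{0..<K}. poly (C (e r) (e s)) 0 * u $ r) = 0" if s: "s < K" for s
    proof -
      have "(transpose_mat (Mt 0) *\<^sub>v u) $ s = 0" using u(3) s by simp
      then show ?thesis using s u(1) unfolding Mt_def by (simp add: scalar_prod_def)
    qed
    define r0 where "r0 = csqrt (6*mu^2/lam)"
    have r2: "r0^2 = 6*mu^2/lam" unfolding r0_def by simp
    have r0: "r0 \<noteq> 0" using r2 lam0 mu0 by auto
    define u' where "u' b = u $ (inv_into {0..<K} e b)" for b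
    have u'e: "u' (e r) = u $ r" if "r < K" for r
      unfolding u'_def using bij_betw_inv_into_left[OF e] that by simp
    have Z: "\<forall>z\<in>PiE {..<N} (\<lambda>_. {0,r0,-r0}). (\<Sum>b\<in>BB. u' b * mono b z) = 0"
    proof
      fix z assume "z \<in> PiE {..<N} (\<lambda>_. {0,r0,-r0})"
      then have zg: "\<forall>i<N. z i \<in> {0, r0, -r0}" by auto
      note g = D_grid[OF r2 zg]
      have "D z 0 * (\<Sum>b\<in>BB. u' b * mono b z) = (\<Sum>r\<in>{0..<K}. u $ r * (D z 0 * mono (e r) z))"
        unfolding reidx sum_distrib_left by (intro sum.cong refl) (simp add: u'e mult_ac)
      also have "\<dots> = (\<Sum>r\<in>{0..<K}. u $ r * (\<Sum>s\<in>{0..<K}. poly (C (e r) (e s)) 0 * mono (e s) z))"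
        by (intro sum.cong refl) (simp add: C eB g(1) reidx)
      also have "\<dots> = (\<Sum>s\<in>{0..<K}. mono (e s) z * (\<Sum>r\<in>{0..<K}. poly (C (e r) (e s)) 0 * u $ r))"
        unfolding sum_distrib_left by (subst sum.swap) (simp add: mult_ac)
      also have "\<dots> = 0" using col by simp
      finally show "(\<Sum>b\<in>BB. u' b * mono b z) = 0" using g(2) by simp
    qed
    have "u = 0\<^sub>v K"
    proof (rule eq_vecI)
      fix r assume "r < dim_vec (0\<^sub>v K)"
      then have r: "r < K" by simp
      have "u' (e r) = 0" by (rule grid_indep[OF r0 Z eB[OF r]])
      then show "u $ r = 0\<^sub>v K $ r" using u'e[OF r] r by simp
    qed (use u(1) in simp)
    then show False using u(2) by simp
  qed
  have "P \<noteq> 0" using P0 by auto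
  then have "finite {J. poly P J = 0}" by (rule poly_roots_finite)
  moreover have "S L lam mu \<subseteq> {J. poly P J = 0}" using S0 by blast
  ultimately show ?thesis by (rule finite_subset[rotated])
qed

end

theorem corollary1:
  fixes lam mu :: complex
  assumes "lam \<noteq> 0" and "mu \<noteq> 0"
  shows "countable (\<Union>L\<in>{2..}. S L lam mu)"
proof (rule countable_UN)
  show "countable {2::nat..}" by simp
  fix L :: nat assume "L \<in> {2..}"
  then interpret lat L lam mu by unfold_locales (use assms in auto)
  show "countable (S L lam mu)" using S_finite by (rule countable_finite)
qed

end
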